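(* Let $f:\mathbb{R}^n\times\mathbb{R}^p\to[-\infty,\infty]$ be a proper nearly convex function and $F:\mathbb{R}^n\rightrightarrows\mathbb{R}^p$ a nearly convex set-valued mapping such that $\operatorname{ri}(\operatorname{dom} f)\cap\operatorname{ri}(\operatorname{gph} F)\neq\emptyset$. Then the optimal value function $\mu(x)=\inf\{f(x,y): y\in F(x)\}$, $x\in\mathbb{R}^n$ (with $\inf\emptyset=\infty$), is nearly convex.
   Context: A set $\Omega\subset\mathbb{R}^k$ is nearly convex if there is a convex set $C$ with $C\subset\Omega\subset\overline{C}$. For an arbitrary set $\Omega$, $\operatorname{ri}\Omega=\{a\in\Omega:\exists\delta>0,\ B(a;\delta)\cap\operatorname{aff}\Omega\subset\Omega\}$. For $f:\mathbb{R}^k\to[-\infty,\infty]$: $\operatorname{dom} f=\{x:f(x)<\infty\}$, $\operatorname{epi} f=\{(x,\lambda):f(x)\le\lambda\}$; $f$ is nearly convex if $\operatorname{epi} f$ is nearly convex and proper if $\operatorname{dom} f\neq\emptyset$ and $f>-\infty$ everywhere. For $F:\mathbb{R}^n\rightrightarrows\mathbb{R}^p$, $\operatorname{gph} F=\{(x,y):y\in F(x)\}$, and $F$ is nearly convex if $\operatorname{gph}F$ is nearly convex. *)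

theory Defs
  imports "HOL-Analysis.Analysis" "HOL-Library.Extended_Real"
begin

definition nearly_convex :: "'a::euclidean_space set \<Rightarrow> bool" where
  "nearly_convex \<Omega> \<longleftrightarrow> (\<exists>C. convex C \<and> C \<subseteq> \<Omega> \<and> \<Omega> \<subseteq> closure C)"

definition ri :: "'a::euclidean_space set \<Rightarrow> 'a set" where
  "ri \<Omega> = {a \<in> \<Omega>. \<exists>\<delta>>0. ball a \<delta> \<inter> affine hull \<Omega> \<subseteq> \<Omega>}"

definition edom :: "('a \<Rightarrow> ereal) \<Rightarrow> 'a set" where
  "edom f = {x. f x < \<infinity>}"

definition epi :: "('a \<Rightarrow> ereal) \<Rightarrow> ('a \<times> real) set" where
  "epi f = {(x, t). f x \<le> ereal t}"

definition nearly_convex_fun :: "('a::euclidean_space \<Rightarrow> ereal) \<Rightarrow> bool" where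
  "nearly_convex_fun f \<longleftrightarrow> nearly_convex (epi f)"

definition proper_fun :: "('a \<Rightarrow> ereal) \<Rightarrow> bool" where
  "proper_fun f \<longleftrightarrow> edom f \<noteq> {} \<and> (\<forall>x. f x \<noteq> -\<infinity>)"

definition gph :: "('a \<Rightarrow> 'b set) \<Rightarrow> ('a \<times> 'b) set" where
  "gph F = {(x, y). y \<in> F x}"

definition nearly_convex_map :: "('a::euclidean_space \<Rightarrow> 'b::euclidean_space set) \<Rightarrow> bool" where
  "nearly_convex_map F \<longleftrightarrow> nearly_convex (gph F)"

text \<open>Optimal value function; Inf of the empty set of ereal is \<infinity>.\<close>
definition optimal_value :: "('a \<times> 'b \<Rightarrow> ereal) \<Rightarrow> ('a \<Rightarrow> 'b set) \<Rightarrow> 'a \<Rightarrow> ereal" where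
  "optimal_value f F x = Inf {f (x, y) | y. y \<in> F x}"

lemma Inf_empty_ereal: "Inf ({} :: ereal set) = \<infinity>" by (simp add: top_ereal_def)

end

theory Submission
  imports Defs
begin

lemma aff_eq:
  fixes C :: "'a::euclidean_space set"
  assumes "C \<subseteq> S" "S \<subseteq> closure C"
  shows "affine hull S = affine hull C"
proof
  show "affine hull S \<subseteq> affine hull C"
    using hull_mono[OF assms(2), of affine] by simp
  show "affine hull C \<subseteq> affine hull S" using hull_mono[OF assms(1)] .
qed

lemma ri_eq:
  fixes C :: "'a::euclidean_space set"
  assumes "convex C" "C \<subseteq> S" "S \<subseteq> closure C"
  shows "ri S = rel_interior C"
proof
  have A: "affine hull S = affine hull C" using aff_eq assms(2,3) .
  show "ri S \<subseteq> rel_interior C"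
  proof
    fix a assume "a \<in> ri S"
    then obtain d where "a \<in> S" "d > 0" "ball a d \<inter> affine hull S \<subseteq> S"
      unfolding ri_def by auto
    then have "a \<in> rel_interior (closure C)"
      unfolding mem_rel_interior_ball using A assms(3) by auto
    then show "a \<in> rel_interior C" using convex_rel_interior_closure[OF assms(1)] by simp
  qed
  show "rel_interior C \<subseteq> ri S"
  proof
    fix a assume "a \<in> rel_interior C"
    then obtain d where "a \<in> C" "d > 0" "ball a d \<inter> affine hull C \<subseteq> C"
      unfolding mem_rel_interior_ball by auto
    then show "a \<in> ri S" unfolding ri_def using A assms(2) by auto
  qed
qed

theorem theorem5p2:
  fixes f :: "'n::euclidean_space \<times> 'p::euclidean_space \<Rightarrow> ereal"
    and F :: "'n \<Rightarrow> 'p set"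
  assumes "proper_fun f" and "nearly_convex_fun f"
    and "nearly_convex_map F"
    and "ri (edom f) \<inter> ri (gph F) \<noteq> {}"
  shows "nearly_convex_fun (optimal_value f F)"
proof -
  obtain Cf where Cf: "convex Cf" "Cf \<subseteq> epi f" "epi f \<subseteq> closure Cf"
    using assms(2) unfolding nearly_convex_fun_def nearly_convex_def by auto
  obtain CF where CF: "convex CF" "CF \<subseteq> gph F" "gph F \<subseteq> closure CF"
    using assms(3) unfolding nearly_convex_map_def nearly_convex_def by auto
  have dom: "edom f = fst ` epi f"
  proof
    show "edom f \<subseteq> fst ` epi f"
    proof
      fix z assume "z \<in> edom f"
      then have "f z < \<infinity>" unfolding edom_def by simp
      moreover have "f z \<noteq> -\<infinity>" using assms(1) unfolding proper_fun_def by blast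
      ultimately obtain r where "f z = ereal r" by (cases "f z") auto
      then have "(z, r) \<in> epi f" unfolding epi_def by simp
      then show "z \<in> fst ` epi f" by force
    qed
    show "fst ` epi f \<subseteq> edom f"
      unfolding epi_def edom_def by auto
  qed
  have lin_fst: "linear (fst :: ('n \<times> 'p) \<times> real \<Rightarrow> 'n \<times> 'p)" by (rule linear_fst)
  have "fst ` epi f \<subseteq> fst ` closure Cf" using Cf(3) by auto
  also have "\<dots> \<subseteq> closure (fst ` Cf)"
    by (rule closure_linear_image_subset[OF lin_fst])
  finally have dom2: "edom f \<subseteq> closure (fst ` Cf)" using dom by simp
  have dom1: "fst ` Cf \<subseteq> edom f" using dom Cf(2) by auto
  have cfst: "convex (fst ` Cf)" using convex_linear_image[OF lin_fst Cf(1)] .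
  have ri1: "ri (edom f) = fst ` rel_interior Cf"
    using ri_eq[OF cfst dom1 dom2] rel_interior_convex_linear_image[OF lin_fst Cf(1)] by simp
  have ri2: "ri (gph F) = rel_interior CF" using ri_eq[OF CF] .
  obtain z where z: "z \<in> fst ` rel_interior Cf" "z \<in> rel_interior CF"
    using assms(4) ri1 ri2 by auto
  then obtain t where zt: "(z, t) \<in> rel_interior Cf" by force
  have "rel_interior (CF \<times> (UNIV :: real set)) = rel_interior CF \<times> UNIV"
    using rel_interior_Times[OF CF(1) convex_UNIV] by simp
  then have zt2: "(z, t) \<in> rel_interior (CF \<times> (UNIV :: real set))" using z(2) by simp
  define D where "D = Cf \<inter> (CF \<times> (UNIV :: real set))"
  have cD: "convex D" unfolding D_def using Cf(1) CF(1) convex_Times convex_UNIV convex_Int by blast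
  have clD: "closure D = closure Cf \<inter> closure (CF \<times> (UNIV :: real set))"
  proof -
    have "closure (\<Inter>{Cf, CF \<times> (UNIV :: real set)}) = \<Inter>(closure ` {Cf, CF \<times> (UNIV :: real set)})"
    proof (rule closure_Inter_convex)
      fix S assume "S \<in> {Cf, CF \<times> (UNIV :: real set)}"
      then show "convex S" using Cf(1) CF(1) convex_Times[OF CF(1) convex_UNIV] by blast
    next
      have "(z, t) \<in> \<Inter>(rel_interior ` {Cf, CF \<times> (UNIV :: real set)})" using zt zt2 by simp
      then show "\<Inter>(rel_interior ` {Cf, CF \<times> (UNIV :: real set)}) \<noteq> {}" by blast
    qed
    then show ?thesis unfolding D_def by simp
  qed
  define E where "E = {((x, y), s). f (x, y) \<le> ereal s \<and> y \<in> F x}"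
  have DE: "D \<subseteq> E"
  proof
    fix w assume w: "w \<in> D"
    obtain x y s where ws: "w = ((x, y), s)" by (metis prod.exhaust)
    have "w \<in> epi f" "fst w \<in> gph F" using w Cf(2) CF(2) unfolding D_def by auto
    then show "w \<in> E" unfolding ws E_def epi_def gph_def by simp
  qed
  have ED: "E \<subseteq> closure D"
  proof
    fix w assume w: "w \<in> E"
    then have "w \<in> epi f" unfolding E_def epi_def by auto
    moreover have "fst w \<in> gph F" using w unfolding E_def gph_def by auto
    ultimately have "w \<in> closure Cf" "fst w \<in> closure CF" using Cf(3) CF(3) by blast+
    then show "w \<in> closure D" unfolding clD closure_Times by (simp add: mem_Times_iff)
  qed
  define g where "g = (\<lambda>((x::'n, y::'p), s::real). (x, s))"
  have lg: "linear g"
    unfolding g_def by (rule linearI) (auto simp: case_prod_beta)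
  define C' where "C' = g ` D"
  have cC': "convex C'" unfolding C'_def using convex_linear_image[OF lg cD] .
  let ?mu = "optimal_value f F"
  have sub1: "C' \<subseteq> epi ?mu"
  proof
    fix w assume "w \<in> C'"
    then obtain v where v: "v \<in> D" "w = g v" unfolding C'_def by blast
    obtain x y s where vs: "v = ((x, y), s)" by (metis prod.exhaust)
    have xys: "((x, y), s) \<in> E" "w = (x, s)" using v DE vs unfolding g_def by auto
    then have "f (x, y) \<le> ereal s" "y \<in> F x" unfolding E_def by auto
    then have m: "f (x, y) \<in> {f (x, y') | y'. y' \<in> F x}" "f (x, y) \<le> ereal s" by blast+
    have "?mu x \<le> f (x, y)" unfolding optimal_value_def using m(1) by (rule Inf_lower)
    then have "?mu x \<le> ereal s" using m(2) by (rule order_trans)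
    then show "w \<in> epi ?mu" using xys unfolding epi_def by simp
  qed
  have gE: "g ` E \<subseteq> closure C'"
  proof -
    have "g ` E \<subseteq> g ` closure D" using ED by auto
    also have "\<dots> \<subseteq> closure C'" unfolding C'_def by (rule closure_linear_image_subset[OF lg])
    finally show ?thesis .
  qed
  have sub2: "epi ?mu \<subseteq> closure C'"
  proof
    fix w assume "w \<in> epi ?mu"
    then obtain x s where w: "w = (x, s)" "?mu x \<le> ereal s" unfolding epi_def by auto
    have near: "(x, s + e) \<in> closure C'" if "e > 0" for e
    proof -
      have "ereal s < ereal (s + e)" using that by simp
      with w(2) have "?mu x < ereal (s + e)" by (rule le_less_trans)
      then obtain v where "v \<in> {f (x, y) | y. y \<in> F x}" "v < ereal (s + e)"
        unfolding optimal_value_def by (auto simp: Inf_less_iff)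
      then obtain y where "y \<in> F x" "f (x, y) \<le> ereal (s + e)" by auto
      then have "((x, y), s + e) \<in> E" unfolding E_def by auto
      then have "g ((x, y), s + e) \<in> closure C'" using gE by blast
      then show ?thesis unfolding g_def by simp
    qed
    show "w \<in> closure C'"
      unfolding w(1) closure_approachable
    proof (intro allI impI)
      fix e :: real assume e: "e > 0"
      then have "(x, s + e/2) \<in> closure C'" using near by simp
      moreover have "e/2 > 0" using e by simp
      ultimately obtain u where u: "u \<in> C'" "dist u (x, s + e/2) < e/2"
        unfolding closure_approachable by blast
      have "dist (x, s + e/2) (x, s) = e/2" using e by (simp add: dist_Pair_Pair dist_real_def)
      moreover have "dist u (x, s) \<le> dist u (x, s + e/2) + dist (x, s + e/2) (x, s)"
        by (rule dist_triangle)
      ultimately have "dist u (x, s) < e" using u(2) by linarith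
      then show "\<exists>u\<in>C'. dist u (x, s) < e" using u(1) by blast
    qed
  qed
  show ?thesis unfolding nearly_convex_fun_def nearly_convex_def
    using cC' sub1 sub2 by blast
qed

end
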